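(* Let $g$ be a positive integer; suppose that for some $l$ the set $S_l$ contains a consecutive prospective prime pair with gap $g$, and let $j>l+2$. Let $(a,a+g)$ be a consecutive prospective prime pair with gap $g$ in $S_j$. For $0\le m\le P_{j+1}-1$ put $(a_m,a_m+g)=(a+mP_j\#,\,a+g+mP_j\#)$, and call $m$ allowed if both $a_m$ and $a_m+g$ are coprime to $P_{j+1}\#$. Then for each allowed $m$ the pair $(a_m,a_m+g)$ lies in the subset $S_{j+1}^{(m)}$ (so distinct allowed $m$ give pairs in distinct subsets of $S_{j+1}$), and the number of allowed $m$ is $P_{j+1}-1$ if $P_{j+1}\mid g$ and $P_{j+1}-2$ if $P_{j+1}\nmid g$; i.e., the generated pairs occupy, one each, all but one subset of $S_{j+1}$ if $P_{j+1}\mid g$ and all but two subsets otherwise.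
   Context: $P_k$ denotes the $k$-th prime ($P_1=2$), $P_k\#=\prod_{i=1}^kP_i$. $S_k=\{N\in\mathbb{N}:5\le N\le4+P_k\#\}$ and $S_k^{(m)}=\{N:5+mP_{k-1}\#\le N\le 4+(m+1)P_{k-1}\#\}$ for $0\le m\le P_k-1$. A prospective prime in $S_k$ is an $N\in S_k$ coprime to $P_k\#$; prospective primes $a<b$ in $S_k$ are consecutive if no integer strictly between them is coprime to $P_k\#$; a consecutive prospective prime pair with gap $g$ is a pair $(a,a+g)$ of consecutive prospective primes. *)

theory Defs
  imports "HOL-Computational_Algebra.Primes" "HOL-Library.Infinite_Set"
begin

text \<open>P k = k-th prime, indexed from 1 (P 1 = 2).\<close>
definition P :: "nat \<Rightarrow> nat" where
  "P k = enumerate {p. prime p} (k - 1)"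

definition primorial :: "nat \<Rightarrow> nat" where
  "primorial k = (\<Prod>i\<in>{1..k}. P i)"

definition S :: "nat \<Rightarrow> nat set" where
  "S k = {5 .. 4 + primorial k}"

definition Ssub :: "nat \<Rightarrow> nat \<Rightarrow> nat set" where
  "Ssub k m = {5 + m * primorial (k - 1) .. 4 + (m + 1) * primorial (k - 1)}"

definition prospective :: "nat \<Rightarrow> nat \<Rightarrow> bool" where
  "prospective k N \<longleftrightarrow> N \<in> S k \<and> coprime N (primorial k)"

definition consecutive_pp :: "nat \<Rightarrow> nat \<Rightarrow> nat \<Rightarrow> bool" where
  "consecutive_pp k a b \<longleftrightarrow> prospective k a \<and> prospective k b \<and> a < b \<and>
     (\<forall>n. a < n \<and> n < b \<longrightarrow> \<not> coprime n (primorial k))"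

definition cpp_gap :: "nat \<Rightarrow> nat \<Rightarrow> nat \<Rightarrow> bool" where
  "cpp_gap k g a \<longleftrightarrow> consecutive_pp k a (a + g)"

end

theory Submission
  imports Defs "HOL-Number_Theory.Number_Theory"
begin

lemma inf_primes: "infinite {p::nat. prime p}"
  using primes_infinite by simp

lemma P_prime: "prime (P k)"
  unfolding P_def using enumerate_in_set[OF inf_primes] by simp

lemma P_inj: "i \<ge> 1 \<Longrightarrow> k \<ge> 1 \<Longrightarrow> i \<noteq> k \<Longrightarrow> P i \<noteq> P k"
proof -
  assume "i \<ge> 1" "k \<ge> 1" "i \<noteq> k"
  then have "i - 1 \<noteq> k - 1" by simp
  then have "i - 1 < k - 1 \<or> k - 1 < i - 1" by arith
  then show ?thesis unfolding P_def using enumerate_mono[OF _ inf_primes]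
    by (metis less_irrefl)
qed

lemma coprime_P_prim: "coprime (P (Suc j)) (primorial j)"
  unfolding primorial_def
proof (rule prod_coprime_right)
  fix i assume "i \<in> {1..j}"
  then have "P i \<noteq> P (Suc j)" using P_inj[of i "Suc j"] by auto
  then show "coprime (P (Suc j)) (P i)" using primes_coprime P_prime by metis
qed

lemma prim_Suc: "primorial (Suc j) = primorial j * P (Suc j)"
  unfolding primorial_def by (simp add: prod.nat_ivl_Suc' mult.commute)

lemma uniq_sol:
  fixes p Q c m1 m2 :: nat
  assumes "coprime p Q" "p dvd c + m1 * Q" "p dvd c + m2 * Q" "m1 < p" "m2 < p"
  shows "m1 = m2"
proof -
  have "[c + m1 * Q = c + m2 * Q] (mod p)"
    using assms(2,3) by (metis cong_def dvd_eq_mod_eq_0)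
  then have "[m1 * Q = m2 * Q] (mod p)" by (simp add: cong_add_lcancel_nat)
  then have "[m1 = m2] (mod p)" using assms(1) cong_mult_rcancel_nat
    by (metis coprime_commute)
  then show ?thesis using assms(4,5) by (simp add: cong_def)
qed

lemma ex_sol:
  fixes p Q c :: nat
  assumes "coprime p Q" "p > 0"
  shows "\<exists>m<p. p dvd c + m * Q"
proof -
  let ?f = "\<lambda>m. (c + m * Q) mod p"
  have inj: "inj_on ?f {..<p}"
  proof (rule inj_onI)
    fix x y assume "x \<in> {..<p}" "y \<in> {..<p}" "?f x = ?f y"
    then have "[x * Q = y * Q] (mod p)"
      by (metis cong_add_lcancel_nat cong_def)
    then have "[x = y] (mod p)" using assms(1) cong_mult_rcancel_nat
      by (metis coprime_commute)
    then show "x = y" using \<open>x \<in> _\<close> \<open>y \<in> _\<close> by (simp add: cong_def)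
  qed
  have sub: "?f ` {..<p} \<subseteq> {..<p}" using assms(2) by auto
  have "?f ` {..<p} = {..<p}"
    using card_subset_eq[OF _ sub] card_image[OF inj] by simp
  then have "0 \<in> ?f ` {..<p}" using assms(2) by auto
  then show ?thesis by auto
qed

theorem lemma2:
  fixes g l j a :: nat
  assumes "g > 0"
    and "\<exists>a'. cpp_gap l g a'"
    and "j > l + 2"
    and "cpp_gap j g a"
  shows "(\<forall>m. m \<le> P (j + 1) - 1
              \<and> coprime (a + m * primorial j) (primorial (j + 1))
              \<and> coprime (a + g + m * primorial j) (primorial (j + 1))
            \<longrightarrow> a + m * primorial j \<in> Ssub (j + 1) m
              \<and> a + g + m * primorial j \<in> Ssub (j + 1) m)
       \<and> card {m. m \<le> P (j + 1) - 1
              \<and> coprime (a + m * primorial j) (primorial (j + 1))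
              \<and> coprime (a + g + m * primorial j) (primorial (j + 1))}
         = (if P (j + 1) dvd g then P (j + 1) - 1 else P (j + 1) - 2)"
proof -
  define p where "p = P (Suc j)"
  define Q where "Q = primorial j"
  have pp: "prime p" using P_prime p_def by simp
  then have p2: "p \<ge> 2" using prime_ge_2_nat by blast
  have cpQ: "coprime p Q" using coprime_P_prim p_def Q_def by simp
  have PQ: "primorial (j + 1) = Q * p" using prim_Suc p_def Q_def by simp
  from assms(4) have a1: "a \<in> S j" "a + g \<in> S j" "coprime a Q" "coprime (a + g) Q"
    unfolding cpp_gap_def consecutive_pp_def prospective_def Q_def by auto
  have part1: "a + m * Q \<in> Ssub (j + 1) m \<and> a + g + m * Q \<in> Ssub (j + 1) m" for m
    using a1(1,2) unfolding S_def Ssub_def Q_def by auto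
  have cop: "coprime (x + m * Q) (Q * p) \<longleftrightarrow> \<not> p dvd (x + m * Q)" if "coprime x Q" for x m
  proof -
    have "gcd Q (m * Q + x) = gcd Q x" by (rule gcd_add_mult)
    then have "coprime (x + m * Q) Q" using that
      by (metis coprime_iff_gcd_eq_1 gcd.commute add.commute)
    moreover have "coprime (x + m * Q) p \<longleftrightarrow> \<not> p dvd (x + m * Q)"
    proof
      assume h: "coprime (x + m * Q) p"
      show "\<not> p dvd (x + m * Q)"
      proof
        assume "p dvd (x + m * Q)"
        then have "is_unit p" using h coprime_absorb_right by blast
        then show False using pp by simp
      qed
    next
      assume "\<not> p dvd (x + m * Q)"
      then have "coprime p (x + m * Q)" using pp prime_imp_coprime by blast
      then show "coprime (x + m * Q) p" by (rule coprime_commute[THEN iffD1])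
    qed
    ultimately show ?thesis by simp
  qed
  have setEq: "{m. m \<le> P (j + 1) - 1
              \<and> coprime (a + m * primorial j) (primorial (j + 1))
              \<and> coprime (a + g + m * primorial j) (primorial (j + 1))}
     = {..<p} - ({m. m < p \<and> p dvd a + m * Q} \<union> {m. m < p \<and> p dvd (a + g) + m * Q})"
  proof -
    have le: "m \<le> p - 1 \<longleftrightarrow> m < p" for m using p2 by arith
    have PQ': "primorial (Suc j) = Q * p" using PQ by simp
    show ?thesis unfolding Suc_eq_plus1[symmetric] PQ' Q_def[symmetric] p_def[symmetric]
    proof (rule Set.set_eqI)
      fix m
      show "m \<in> {m. m \<le> p - 1 \<and> coprime (a + m * Q) (Q * p) \<and> coprime (a + g + m * Q) (Q * p)} \<longleftrightarrow>
        m \<in> {..<p} - ({m. m < p \<and> p dvd a + m * Q} \<union> {m. m < p \<and> p dvd a + g + m * Q})"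
        unfolding mem_Collect_eq le cop[OF a1(3)] cop[OF a1(4)] Diff_iff Un_iff lessThan_iff
        by blast
    qed
  qed
  obtain m0 where m0: "m0 < p" "p dvd a + m0 * Q" using ex_sol[OF cpQ] p2 by fastforce
  obtain m1 where m1: "m1 < p" "p dvd (a + g) + m1 * Q" using ex_sol[OF cpQ] p2 by fastforce
  have B: "{m. m < p \<and> p dvd a + m * Q} = {m0}" using m0 uniq_sol[OF cpQ] by blast
  have C: "{m. m < p \<and> p dvd (a + g) + m * Q} = {m1}" using m1 uniq_sol[OF cpQ] by blast
  have eq: "m0 = m1 \<longleftrightarrow> p dvd g"
  proof
    assume "m0 = m1"
    then have "p dvd (a + m0 * Q) + g" using m1 by (simp add: ac_simps)
    then show "p dvd g" using m0(2) by (simp add: dvd_add_right_iff)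
  next
    assume "p dvd g"
    then have "p dvd (a + g) + m0 * Q" using m0(2)
      by (metis add.assoc add.commute dvd_add)
    then show "m0 = m1" using uniq_sol[OF cpQ _ m1(2) m0(1) m1(1)] by simp
  qed
  have card: "card ({..<p} - ({m0} \<union> {m1})) = (if p dvd g then p - 1 else p - 2)"
  proof (cases "p dvd g")
    case True
    then have "{m0} \<union> {m1} = {m0}" using eq by simp
    then show ?thesis using True m0(1) by (simp add: card_Diff_singleton)
  next
    case False
    then have ne: "m0 \<noteq> m1" using eq by simp
    have sub: "{m0} \<union> {m1} \<subseteq> {..<p}" using m0(1) m1(1) by auto
    have c2: "card ({m0} \<union> {m1}) = 2" using ne by simp
    show ?thesis using card_Diff_subset[OF _ sub] c2 False by simp
  qed
  have "card {m. m \<le> P (j + 1) - 1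
              \<and> coprime (a + m * primorial j) (primorial (j + 1))
              \<and> coprime (a + g + m * primorial j) (primorial (j + 1))}
         = (if P (j + 1) dvd g then P (j + 1) - 1 else P (j + 1) - 2)"
    unfolding setEq B C card using p_def by simp
  then show ?thesis
    using part1 unfolding Q_def by blast
qed

end
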